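(* Let $S\in\mathbb{R}^{n\times n}$ and $D\in\mathbb{R}^{r\times r}$ be real diagonal matrices and let $X\in\mathbb{R}^{n\times r}$ be such that $X^{T}X$ is diagonal and $SX=X(D+X^{T}X)$. Then there exists a scaled permutation $Y\in\mathbb{R}^{n\times r}$ such that $SY=Y(D+Y^{T}Y)$, $Y^{T}Y=X^{T}X$, and $\langle S,YY^{T}\rangle=\langle S,XX^{T}\rangle$.
   Context: A matrix is a scaled permutation if it has at most one nonzero entry in each column and at most one nonzero entry in each row. $\langle A,B\rangle=\mathrm{tr}(A^{T}B)$. *)

theory Defs
  imports "HOL-Analysis.Analysis"
begin

definition is_diag :: "real^'n^'n \<Rightarrow> bool" where
  "is_diag A \<longleftrightarrow> (\<forall>i j. i \<noteq> j \<longrightarrow> A $ i $ j = 0)"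

definition scaled_perm :: "real^'c^'r \<Rightarrow> bool" where
  "scaled_perm Y \<longleftrightarrow>
     (\<forall>i j k. Y $ i $ j \<noteq> 0 \<and> Y $ i $ k \<noteq> 0 \<longrightarrow> j = k) \<and>
     (\<forall>i k j. Y $ i $ j \<noteq> 0 \<and> Y $ k $ j \<noteq> 0 \<longrightarrow> i = k)"

definition frob_inner :: "real^'c^'r \<Rightarrow> real^'c^'r \<Rightarrow> real" where
  "frob_inner A B = trace (transpose A ** B)"

end

theory Submission
  imports Defs
begin

lemma sum_single:
  fixes f :: "'a \<Rightarrow> 'b::comm_monoid_add"
  assumes "finite A" "a \<in> A" "\<And>x. x \<in> A \<Longrightarrow> x \<noteq> a \<Longrightarrow> f x = 0"
  shows "sum f A = f a"
proof -
  have "sum f A = f a + sum f (A - {a})" using assms(1,2) by (rule sum.remove)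
  also have "sum f (A - {a}) = 0" using assms(3) by (intro sum.neutral) auto
  finally show ?thesis by simp
qed

lemma diag_eq_iff:
  fixes S :: "real^'n^'n" and M :: "real^'r^'r" and Z :: "real^'r^'n"
  assumes "is_diag S" "is_diag M"
  shows "S ** Z = Z ** M \<longleftrightarrow> (\<forall>i j. S$i$i * Z$i$j = Z$i$j * M$j$j)"
proof -
  have a: "(S ** Z)$i$j = S$i$i * Z$i$j" for i j
  proof -
    have "(S ** Z)$i$j = (\<Sum>k\<in>UNIV. S$i$k * Z$k$j)" by (simp add: matrix_matrix_mult_def)
    also have "\<dots> = S$i$i * Z$i$j"
      by (rule sum_single[where a=i]) (use assms(1) in \<open>auto simp: is_diag_def\<close>)
    finally show ?thesis .
  qed
  have b: "(Z ** M)$i$j = Z$i$j * M$j$j" for i j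
  proof -
    have "(Z ** M)$i$j = (\<Sum>k\<in>UNIV. Z$i$k * M$k$j)" by (simp add: matrix_matrix_mult_def)
    also have "\<dots> = Z$i$j * M$j$j"
      by (rule sum_single[where a=j]) (use assms(2) in \<open>auto simp: is_diag_def\<close>)
    finally show ?thesis .
  qed
  show ?thesis by (simp add: vec_eq_iff a b)
qed

lemma frob_formula:
  fixes S :: "real^'n^'n" and Z :: "real^'r^'n"
  assumes "is_diag S" "\<forall>i j. Z$i$j \<noteq> 0 \<longrightarrow> S$i$i = l j"
  shows "frob_inner S (Z ** transpose Z) = (\<Sum>j\<in>UNIV. l j * (\<Sum>i\<in>UNIV. (Z$i$j)^2))"
proof -
  have "frob_inner S (Z ** transpose Z) = (\<Sum>i\<in>UNIV. \<Sum>k\<in>UNIV. S$k$i * (\<Sum>j\<in>UNIV. Z$k$j * Z$i$j))"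
    by (simp add: frob_inner_def trace_def matrix_matrix_mult_def transpose_def)
  also have "\<dots> = (\<Sum>i\<in>UNIV. S$i$i * (\<Sum>j\<in>UNIV. Z$i$j * Z$i$j))"
  proof (rule sum.cong[OF refl])
    fix i show "(\<Sum>k\<in>UNIV. S$k$i * (\<Sum>j\<in>UNIV. Z$k$j * Z$i$j)) = S$i$i * (\<Sum>j\<in>UNIV. Z$i$j * Z$i$j)"
      by (rule sum_single[where a=i]) (use assms(1) in \<open>auto simp: is_diag_def\<close>)
  qed
  also have "\<dots> = (\<Sum>i\<in>UNIV. \<Sum>j\<in>UNIV. l j * (Z$i$j)^2)"
  proof (rule sum.cong[OF refl])
    fix i
    have "S$i$i * (Z$i$j * Z$i$j) = l j * (Z$i$j)^2" for j
      using assms(2) by (cases "Z$i$j = 0") (auto simp: power2_eq_square)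
    then show "S$i$i * (\<Sum>j\<in>UNIV. Z$i$j * Z$i$j) = (\<Sum>j\<in>UNIV. l j * (Z$i$j)^2)"
      by (simp add: sum_distrib_left)
  qed
  also have "\<dots> = (\<Sum>j\<in>UNIV. l j * (\<Sum>i\<in>UNIV. (Z$i$j)^2))"
    by (subst sum.swap) (simp add: sum_distrib_left)
  finally show ?thesis .
qed

theorem lemma23:
  fixes S :: "real^'n^'n" and D :: "real^'r^'r" and X :: "real^'r^'n"
  assumes "is_diag S" and "is_diag D" and "is_diag (transpose X ** X)"
    and "S ** X = X ** (D + transpose X ** X)"
  shows "\<exists>Y :: real^'r^'n. scaled_perm Y \<and> S ** Y = Y ** (D + transpose Y ** Y)
           \<and> transpose Y ** Y = transpose X ** X
           \<and> frob_inner S (Y ** transpose Y) = frob_inner S (X ** transpose X)"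
proof -
  define c where "c j = (\<Sum>i\<in>UNIV. (X$i$j)^2)" for j
  define l where "l j = D$j$j + c j" for j
  have XX: "(transpose X ** X)$j$k = (if j = k then c j else 0)" for j k
    using assms(3) by (auto simp: is_diag_def c_def matrix_matrix_mult_def transpose_def power2_eq_square)
  have c_nn: "c j \<ge> 0" for j unfolding c_def by (simp add: sum_nonneg)
  have diagDC: "is_diag (D + transpose X ** X)"
    using assms(2,3) by (simp add: is_diag_def)
  have DCjj: "(D + transpose X ** X)$j$j = l j" for j by (simp add: XX l_def)
  have eig: "X$i$j \<noteq> 0 \<Longrightarrow> S$i$i = l j" for i j
    using assms(4) diagDC assms(1) by (simp add: diag_eq_iff XX l_def) blast
  define G where "G lam = {j. c j \<noteq> 0 \<and> l j = lam}" for lam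
  define I where "I lam = {i. S$i$i = lam}" for lam
  have card_le: "card (G lam) \<le> card (I lam)" for lam
  proof -
    let ?V = "(\<lambda>j. column j X) ` G lam"
    have dot: "column j X \<bullet> column k X = (if j = k then c j else 0)" for j k
      using XX[of j k] by (simp add: inner_vec_def column_def matrix_matrix_mult_def transpose_def)
    have inj: "inj_on (\<lambda>j. column j X) (G lam)"
    proof (rule inj_onI)
      fix j k assume "j \<in> G lam" "k \<in> G lam" "column j X = column k X"
      then show "j = k" using dot[of j k] dot[of j j] by (auto simp: G_def split: if_splits)
    qed
    have orth: "pairwise orthogonal ?V"
      unfolding pairwise_def orthogonal_def using dot by auto
    have nz: "0 \<notin> ?V"
    proof
      assume "0 \<in> ?V"
      then obtain j where "j \<in> G lam" "column j X = 0" by auto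
      then show False using dot[of j j] by (simp add: G_def)
    qed
    have ind: "independent ?V" by (rule pairwise_orthogonal_independent[OF orth nz])
    have sp: "?V \<subseteq> span ((\<lambda>i. axis i (1::real)) ` I lam)"
    proof
      fix v assume "v \<in> ?V"
      then obtain j where j: "j \<in> G lam" "v = column j X" by auto
      have vz: "i \<notin> I lam \<Longrightarrow> v$i = 0" for i
        using eig[of i j] j by (auto simp: column_def I_def G_def)
      have "v = (\<Sum>i\<in>UNIV. (v$i) *s axis i 1)" by (simp add: basis_expansion)
      also have "\<dots> = (\<Sum>i\<in>I lam. (v$i) *s axis i 1)"
        by (rule sum.mono_neutral_right) (auto simp: vz)
      also have "\<dots> \<in> span ((\<lambda>i. axis i (1::real)) ` I lam)"
        unfolding scalar_mult_eq_scaleR by (rule span_sum, rule span_scale, rule span_base, rule imageI)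
      finally show "v \<in> span ((\<lambda>i. axis i (1::real)) ` I lam)" .
    qed
    have "card ?V \<le> card ((\<lambda>i. axis i (1::real)) ` I lam)"
      using independent_span_bound[OF _ ind sp] by simp
    also have "\<dots> \<le> card (I lam)" by (rule card_image_le) simp
    finally show ?thesis using card_image[OF inj] by simp
  qed
  have "\<forall>lam. \<exists>f. f ` G lam \<subseteq> I lam \<and> inj_on f (G lam)"
    using card_le by (intro allI card_le_inj) auto
  then obtain f where f: "\<And>lam. f lam ` G lam \<subseteq> I lam \<and> inj_on (f lam) (G lam)"
    by metis
  define p where "p j = f (l j) j" for j
  have pS: "c j \<noteq> 0 \<Longrightarrow> S$(p j)$(p j) = l j" for j
    using f[of "l j"] by (auto simp: p_def G_def I_def)
  have pinj: "c j \<noteq> 0 \<Longrightarrow> c k \<noteq> 0 \<Longrightarrow> p j = p k \<Longrightarrow> j = k" for j k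
  proof -
    assume a: "c j \<noteq> 0" "c k \<noteq> 0" "p j = p k"
    then have "l j = l k" using pS[of j] pS[of k] by simp
    then have "j \<in> G (l j)" "k \<in> G (l j)" using a by (auto simp: G_def)
    then show "j = k" using f[of "l j"] a(3) `l j = l k` by (auto simp: p_def inj_on_def)
  qed
  define Y :: "real^'r^'n" where "Y = (\<chi> i j. if c j \<noteq> 0 \<and> p j = i then sqrt (c j) else 0)"
  have Yij: "Y$i$j = (if c j \<noteq> 0 \<and> p j = i then sqrt (c j) else 0)" for i j
    by (simp add: Y_def)
  have Ynz: "Y$i$j \<noteq> 0 \<Longrightarrow> c j \<noteq> 0 \<and> p j = i" for i j
    by (simp add: Yij split: if_splits)
  have sp: "scaled_perm Y"
    unfolding scaled_perm_def using Ynz pinj by metis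
  have colsq: "(\<Sum>i\<in>UNIV. (Y$i$j)^2) = c j" for j
  proof (cases "c j = 0")
    case True then show ?thesis by (simp add: Yij)
  next
    case False
    have "(\<Sum>i\<in>UNIV. (Y$i$j)^2) = (Y$(p j)$j)^2"
      by (rule sum_single) (auto simp: Yij)
    then show ?thesis using False c_nn[of j] by (simp add: Yij)
  qed
  have YY: "transpose Y ** Y = transpose X ** X"
  proof -
    have "(transpose Y ** Y)$j$k = (transpose X ** X)$j$k" for j k
    proof (cases "j = k")
      case True
      then show ?thesis unfolding XX using colsq[of j] by (simp add: matrix_matrix_mult_def transpose_def power2_eq_square)
    next
      case False
      have "Y$i$j * Y$i$k = 0" for i
        using Ynz[of i j] Ynz[of i k] pinj[of j k] False by fastforce
      then have "(\<Sum>i\<in>UNIV. Y$i$j * Y$i$k) = 0" by (intro sum.neutral) simp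
      then show ?thesis unfolding XX using False by (simp add: matrix_matrix_mult_def transpose_def)
    qed
    then show ?thesis by (simp add: vec_eq_iff)
  qed
  have eigY: "Y$i$j \<noteq> 0 \<Longrightarrow> S$i$i = l j" for i j
    using Ynz[of i j] pS[of j] by auto
  have "S$i$i * Y$i$j = Y$i$j * l j" for i j
    using eigY[of i j] by (cases "Y$i$j = 0") auto
  then have eqY: "S ** Y = Y ** (D + transpose Y ** Y)"
    unfolding YY diag_eq_iff[OF assms(1) diagDC] DCjj by blast
  have "frob_inner S (Y ** transpose Y) = (\<Sum>j\<in>UNIV. l j * c j)"
    using frob_formula[where Z=Y and l=l, OF assms(1)] eigY by (simp add: colsq)
  moreover have "frob_inner S (X ** transpose X) = (\<Sum>j\<in>UNIV. l j * c j)"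
    using frob_formula[where Z=X and l=l, OF assms(1)] eig by (simp add: c_def)
  ultimately have "frob_inner S (Y ** transpose Y) = frob_inner S (X ** transpose X)" by simp
  then show ?thesis using sp eqY YY by blast
qed

end
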